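(* Let $\alpha>0$, $M,\tilde M>0$ with $M/\tilde M\ge(1-5^{-\alpha})^{-1}\bigl(1+\frac{1}{5^\alpha-3^\alpha}\bigr)80^\alpha$, and let $n\ge1$. With the construction below, for every $\mathcal Z_{\boldsymbol\kappa_{\bar a},\bar a}\in\mathcal U_{\bar a}$, the function $y=y_{\mathcal C}(\cdot\mid\boldsymbol\kappa_{\bar a},\bar a)$ has unique maximizer $\mathbf{x}^*=\mathbf{c}_{\boldsymbol\kappa_{\bar a},\bar a}$ on $[0,1]^d$ and satisfies $\tilde M\|\mathbf{x}^*-\mathbf{x}\|_\infty^\alpha\le|y(\mathbf{x}^* )-y(\mathbf{x})|\le M\|\mathbf{x}^*-\mathbf{x}\|_\infty^\alpha$ for all $\mathbf{x}\in[0,1]^d$.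
   Context: $\|\mathbf{x}\|_\infty=\max_l|x_l|$. Let $\Delta=\lfloor3^d/2\rfloor$, $\bar a=\lceil4(n+1)/\Delta\rceil+2$, $\gamma_a=5^{-a}/2$, $\hat M=\frac{40^\alpha}{5^\alpha-3^\alpha}\tilde M$. For $a=0,\dots,\bar a$ and $\boldsymbol\kappa_a\in\{1,\dots,5^a\}^d$ let $\mathbf{c}_{\boldsymbol\kappa_a,a}=((2\kappa_{1,a}-1)\gamma_a,\dots,(2\kappa_{d,a}-1)\gamma_a)$ and $\mathcal Z_{\boldsymbol\kappa_a,a}=\{\mathbf{x}\in[0,1]^d:\|\mathbf{x}-\mathbf{c}_{\boldsymbol\kappa_a,a}\|_\infty<\gamma_a\}$. For $a\ge1$, $\mathcal P(\boldsymbol\kappa_a)$ is the level-$(a-1)$ index with $\mathcal Z_{\boldsymbol\kappa_a,a}\subset\mathcal Z_{\mathcal P(\boldsymbol\kappa_a),a-1}$, $\mathcal P^\ell$ its iterate. $\mathcal U_0=\{\mathcal Z_{\mathbf 1,0}\}$; for $a\ge1$, $\mathcal U_a=\{\mathcal Z_{\boldsymbol\kappa_a,a}:\mathcal Z_{\mathcal P(\boldsymbol\kappa_a),a-1}\in\mathcal U_{a-1},\ \|\mathbf{c}_{\boldsymbol\kappa_a,a}-\mathbf{c}_{\mathcal P(\boldsymbol\kappa_a),a-1}\|_\infty\le2\gamma_a\}$. Components on $[0,1]^d$: $y_{\mathcal S}(\mathbf{x}\mid\mathbf 1,0)=\hat M(5^\alpha-3^\alpha)\gamma_1^\alpha$ if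 $\|\mathbf{x}-\mathbf{c}_{\mathbf 1,0}\|_\infty\le3\gamma_1$, $=\hat M5^\alpha\gamma_1^\alpha-\hat M\|\mathbf{x}-\mathbf{c}_{\mathbf 1,0}\|_\infty^\alpha$ if $3\gamma_1\le\|\mathbf{x}-\mathbf{c}_{\mathbf 1,0}\|_\infty\le5\gamma_1$; for $1\le a\le\bar a-1$, $y_{\mathcal S}(\mathbf{x}\mid\boldsymbol\kappa_a,a)=\hat M(5^\alpha-3^\alpha)\gamma_{a+1}^\alpha$ if $\|\mathbf{x}-\mathbf{c}_{\boldsymbol\kappa_a,a}\|_\infty\le3\gamma_{a+1}$, $=\hat M5^\alpha\gamma_{a+1}^\alpha-\hat M\|\mathbf{x}-\mathbf{c}_{\boldsymbol\kappa_a,a}\|_\infty^\alpha$ if $3\gamma_{a+1}<\|\cdot\|_\infty\le5\gamma_{a+1}$, $=0$ otherwise; $y_{\mathcal D}(\mathbf{x}\mid\boldsymbol\kappa_{\bar a},\bar a)=\hat M\gamma_{\bar a}^\alpha-\hat M\|\mathbf{x}-\mathbf{c}_{\boldsymbol\kappa_{\bar a},\bar a}\|_\infty^\alpha$ if $\|\mathbf{x}-\mathbf{c}_{\boldsymbol\kappa_{\bar a},\bar a}\|_\infty\le\gamma_{\bar a}$, $=0$ otherwise. $y_{\mathcal C}(\mathbf{x}\mid\boldsymbol\kappa_{\bar a},\bar a)=y_{\mathcal D}(\mathbf{x}\mid\boldsymbol\kappa_{\bar a},\bar a)+\sum_{\ell=1}^{\bar a-1}y_{\mathcal S}(\mathbf{x}\mid\mathcal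 P^\ell(\boldsymbol\kappa_{\bar a}),\bar a-\ell)+y_{\mathcal S}(\mathbf{x}\mid\mathbf 1,0)$. *)

theory Defs
  imports "HOL-Analysis.Analysis"
begin

text \<open>Points of [0,1]^d are vectors of type real^'d with d = CARD('d).
  Multi-indices kappa in {1..5^a}^d are functions 'd => nat.\<close>

definition linf :: "real^'d::finite \<Rightarrow> real" where
  "linf x = Max (range (\<lambda>i. \<bar>x $ i\<bar>))"

definition unitcube :: "(real^'d::finite) set" where
  "unitcube = {x. \<forall>i. 0 \<le> x $ i \<and> x $ i \<le> 1}"

definition gam :: "nat \<Rightarrow> real" where
  "gam a = (1/5) ^ a / 2"

definition idx :: "nat \<Rightarrow> ('d::finite \<Rightarrow> nat) set" where
  "idx a = {\<kappa>. \<forall>i. 1 \<le> \<kappa> i \<and> \<kappa> i \<le> 5 ^ a}"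

definition cen :: "('d::finite \<Rightarrow> nat) \<Rightarrow> nat \<Rightarrow> real^'d" where
  "cen \<kappa> a = (\<chi> i. (2 * real (\<kappa> i) - 1) * gam a)"

definition Zc :: "('d::finite \<Rightarrow> nat) \<Rightarrow> nat \<Rightarrow> (real^'d) set" where
  "Zc \<kappa> a = {x \<in> unitcube. linf (x - cen \<kappa> a) < gam a}"

definition par :: "('d::finite \<Rightarrow> nat) \<Rightarrow> nat \<Rightarrow> ('d \<Rightarrow> nat)" where
  "par \<kappa> a = (THE \<kappa>'. \<kappa>' \<in> idx (a - 1) \<and> Zc \<kappa> a \<subseteq> Zc \<kappa>' (a - 1))"

fun piter :: "('d::finite \<Rightarrow> nat) \<Rightarrow> nat \<Rightarrow> nat \<Rightarrow> ('d \<Rightarrow> nat)" where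
  "piter \<kappa> a 0 = \<kappa>"
| "piter \<kappa> a (Suc l) = par (piter \<kappa> a l) (a - l)"

fun U :: "nat \<Rightarrow> (real^'d::finite) set set" where
  "U 0 = {Zc (\<lambda>_. 1) 0}"
| "U (Suc a) = {Zc \<kappa> (Suc a) | \<kappa>. \<kappa> \<in> idx (Suc a) \<and>
       Zc (par \<kappa> (Suc a)) a \<in> U a \<and>
       linf (cen \<kappa> (Suc a) - cen (par \<kappa> (Suc a)) a) \<le> 2 * gam (Suc a)}"

definition Delta :: "nat \<Rightarrow> nat" where
  "Delta d = 3 ^ d div 2"

definition abar :: "nat \<Rightarrow> nat \<Rightarrow> nat" where
  "abar n d = nat \<lceil>4 * (real n + 1) / real (Delta d)\<rceil> + 2"

definition Mhat :: "real \<Rightarrow> real \<Rightarrow> real" where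
  "Mhat \<alpha> Mt = 40 powr \<alpha> / (5 powr \<alpha> - 3 powr \<alpha>) * Mt"

definition yS0 :: "real \<Rightarrow> real \<Rightarrow> real^'d::finite \<Rightarrow> real" where
  "yS0 \<alpha> Mt x = (let r = linf (x - cen (\<lambda>_. 1) 0) in
     if r \<le> 3 * gam 1 then Mhat \<alpha> Mt * (5 powr \<alpha> - 3 powr \<alpha>) * gam 1 powr \<alpha>
     else if r \<le> 5 * gam 1 then Mhat \<alpha> Mt * 5 powr \<alpha> * gam 1 powr \<alpha> - Mhat \<alpha> Mt * r powr \<alpha>
     else 0)"

definition yS :: "real \<Rightarrow> real \<Rightarrow> ('d::finite \<Rightarrow> nat) \<Rightarrow> nat \<Rightarrow> real^'d \<Rightarrow> real" where
  "yS \<alpha> Mt \<kappa> a x = (let r = linf (x - cen \<kappa> a) in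
     if r \<le> 3 * gam (a+1) then Mhat \<alpha> Mt * (5 powr \<alpha> - 3 powr \<alpha>) * gam (a+1) powr \<alpha>
     else if r \<le> 5 * gam (a+1) then Mhat \<alpha> Mt * 5 powr \<alpha> * gam (a+1) powr \<alpha> - Mhat \<alpha> Mt * r powr \<alpha>
     else 0)"

definition yD :: "real \<Rightarrow> real \<Rightarrow> ('d::finite \<Rightarrow> nat) \<Rightarrow> nat \<Rightarrow> real^'d \<Rightarrow> real" where
  "yD \<alpha> Mt \<kappa> a x = (let r = linf (x - cen \<kappa> a) in
     if r \<le> gam a then Mhat \<alpha> Mt * gam a powr \<alpha> - Mhat \<alpha> Mt * r powr \<alpha> else 0)"

definition yC :: "real \<Rightarrow> real \<Rightarrow> ('d::finite \<Rightarrow> nat) \<Rightarrow> nat \<Rightarrow> real^'d \<Rightarrow> real" where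
  "yC \<alpha> Mt \<kappa> A x = yD \<alpha> Mt \<kappa> A x
     + (\<Sum>l\<in>{1..A-1}. yS \<alpha> Mt (piter \<kappa> A l) (A - l) x) + yS0 \<alpha> Mt x"

end

theory Submission
  imports Defs
begin


lemma linf_le_iff: "linf (v::real^'d::finite) \<le> t \<longleftrightarrow> (\<forall>i. \<bar>v $ i\<bar> \<le> t)"
  unfolding linf_def by (subst Max_le_iff) auto

lemma linf_less_iff: "linf (v::real^'d::finite) < t \<longleftrightarrow> (\<forall>i. \<bar>v $ i\<bar> < t)"
  unfolding linf_def by (subst Max_less_iff) auto

lemma linf_ge: "\<bar>v $ i\<bar> \<le> linf (v::real^'d::finite)"
  unfolding linf_def by (rule Max_ge) auto

lemma linf_nonneg: "0 \<le> linf (v::real^'d::finite)"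
  using linf_ge[of v] abs_ge_zero order_trans by blast

lemma linf_tri: "linf ((a::real^'d::finite) - c) \<le> linf (a - b) + linf (b - c)"
proof -
  have "\<bar>(a - c) $ i\<bar> \<le> linf (a - b) + linf (b - c)" for i
    using linf_ge[of "a - b" i] linf_ge[of "b - c" i] by auto
  then show ?thesis by (simp add: linf_le_iff)
qed

lemma linf_commute: "linf ((a::real^'d::finite) - b) = linf (b - a)"
proof -
  have "\<bar>(a - b) $ i\<bar> = \<bar>(b - a) $ i\<bar>" for i by auto
  then show ?thesis unfolding linf_def by simp
qed

lemma linf_zero: "linf ((a::real^'d::finite) - b) \<le> 0 \<Longrightarrow> a = b"
  by (auto simp: linf_le_iff vec_eq_iff)

lemma linf_self: "linf ((a::real^'d::finite) - a) = 0"
  using linf_nonneg[of "a - a"] by (simp add: linf_le_iff eq_iff)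

lemma gam_pos: "gam a > 0" by (simp add: gam_def)
lemma gam_Suc: "gam (Suc a) = gam a / 5" by (simp add: gam_def)

lemma cen_cube: "\<kappa> \<in> idx a \<Longrightarrow> cen \<kappa> a \<in> unitcube"
proof -
  assume k: "\<kappa> \<in> idx a"
  have "0 \<le> (2 * real (\<kappa> i) - 1) * gam a \<and> (2 * real (\<kappa> i) - 1) * gam a \<le> 1" for i
  proof -
    have k1: "1 \<le> \<kappa> i" "\<kappa> i \<le> 5 ^ a" using k by (auto simp: idx_def)
    have "real (\<kappa> i) \<le> 5 ^ a" using k1 by (metis of_nat_le_iff of_nat_numeral of_nat_power)
    then have "2 * real (\<kappa> i) - 1 \<le> 2 * 5 ^ a" by linarith
    then have "(2 * real (\<kappa> i) - 1) * gam a \<le> 2 * 5 ^ a * ((1/5)^a / 2)"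
      using gam_pos[of a] unfolding gam_def by (intro mult_right_mono) auto
    also have "\<dots> = 1" by (simp add: power_one_over)
    finally show ?thesis using k1 gam_pos[of a] by auto
  qed
  then show ?thesis by (simp add: unitcube_def cen_def)
qed

lemma cen_in_Zc: "\<kappa> \<in> idx a \<Longrightarrow> cen \<kappa> a \<in> Zc \<kappa> a"
  using cen_cube linf_self[of "cen \<kappa> a"] gam_pos[of a] by (simp add: Zc_def)

lemma Zc_overlap: assumes "y \<in> Zc k1 a" "y \<in> Zc k2 a" shows "k1 = k2"
proof
  fix i
  have g: "gam a > 0" by (rule gam_pos)
  have "\<bar>y $ i - (2 * real (k1 i) - 1) * gam a\<bar> < gam a" "\<bar>y $ i - (2 * real (k2 i) - 1) * gam a\<bar> < gam a"
    using assms linf_ge[of "y - cen k1 a" i] linf_ge[of "y - cen k2 a" i]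
    by (auto simp: Zc_def cen_def)
  then have "\<bar>(real (k1 i) - real (k2 i)) * (2 * gam a)\<bar> < 2 * gam a" by (simp add: abs_if algebra_simps split: if_splits)
  then have "\<bar>real (k1 i) - real (k2 i)\<bar> < 1" using g by (simp add: abs_mult)
  then show "k1 i = k2 i" by linarith
qed

lemma idx0: "\<kappa> \<in> idx 0 \<Longrightarrow> \<kappa> = (\<lambda>_. 1)"
  by (auto simp: idx_def intro!: ext intro: antisym)

lemma par_eq:
  assumes k: "\<kappa> \<in> idx (Suc b)"
  shows "par \<kappa> (Suc b) = (\<lambda>i. (\<kappa> i + 4) div 5)" "(\<lambda>i. (\<kappa> i + 4) div 5) \<in> idx b"
proof -
  let ?p = "(\<lambda>i. (\<kappa> i + 4) div 5)"
  have pidx: "?p \<in> idx b"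
  proof -
    have "1 \<le> (\<kappa> i + 4) div 5 \<and> (\<kappa> i + 4) div 5 \<le> 5 ^ b" for i
    proof -
      have "1 \<le> \<kappa> i" "\<kappa> i \<le> 5 * 5 ^ b" using k by (auto simp: idx_def)
      then show ?thesis by presburger
    qed
    then show ?thesis by (simp add: idx_def)
  qed
  have sub: "Zc \<kappa> (Suc b) \<subseteq> Zc ?p b"
  proof
    fix x assume x: "x \<in> Zc \<kappa> (Suc b)"
    have "\<bar>(x - cen ?p b) $ i\<bar> < gam b" for i
    proof -
      have h: "\<bar>x $ i - (2 * real (\<kappa> i) - 1) * (gam b / 5)\<bar> < gam b / 5"
        using x linf_ge[of "x - cen \<kappa> (Suc b)" i] by (auto simp: Zc_def cen_def gam_Suc)
      have n1: "5 * ((\<kappa> i + 4) div 5) \<le> \<kappa> i + 4" "\<kappa> i \<le> 5 * ((\<kappa> i + 4) div 5)" by presburger+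
      have r1: "5 * real ((\<kappa> i + 4) div 5) \<le> real (\<kappa> i) + 4" "real (\<kappa> i) \<le> 5 * real ((\<kappa> i + 4) div 5)"
        using n1 by (metis of_nat_le_iff of_nat_add of_nat_mult of_nat_numeral)+
      have g: "gam b > 0" by (rule gam_pos)
      have h1: "x $ i < (2 * real (\<kappa> i) - 1) * (gam b / 5) + gam b / 5"
        and h2: "(2 * real (\<kappa> i) - 1) * (gam b / 5) - gam b / 5 < x $ i"
        using h unfolding abs_less_iff by linarith+
      have e1: "(2 * real (\<kappa> i) - 1) * (gam b / 5) + gam b / 5 = real (\<kappa> i) * (2 * gam b / 5)"
        and e2: "(2 * real (\<kappa> i) - 1) * (gam b / 5) - gam b / 5 = (real (\<kappa> i) - 1) * (2 * gam b / 5)"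
        by (simp_all add: field_simps)
      have "x $ i < real (\<kappa> i) * (2 * gam b / 5)" using h1 e1 by linarith
      also have "\<dots> = (real (\<kappa> i) / 5) * (2 * gam b)" by simp
      also have "\<dots> \<le> real ((\<kappa> i + 4) div 5) * (2 * gam b)"
        using r1 g by (intro mult_right_mono) auto
      finally have u: "x $ i < real ((\<kappa> i + 4) div 5) * (2 * gam b)" .
      have "(real ((\<kappa> i + 4) div 5) - 1) * (2 * gam b) \<le> ((real (\<kappa> i) - 1) / 5) * (2 * gam b)"
        using r1 g by (intro mult_right_mono) auto
      also have "\<dots> = (real (\<kappa> i) - 1) * (2 * gam b / 5)" by simp
      also have "\<dots> < x $ i" using h2 e2 by linarith
      finally have l: "(real ((\<kappa> i + 4) div 5) - 1) * (2 * gam b) < x $ i" .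
      show ?thesis using u l by (simp add: cen_def abs_less_iff algebra_simps)
    qed
    then show "x \<in> Zc ?p b" using x by (simp add: Zc_def linf_less_iff)
  qed
  have cz: "cen \<kappa> (Suc b) \<in> Zc \<kappa> (Suc b)" by (rule cen_in_Zc[OF k])
  show "par \<kappa> (Suc b) = ?p"
    unfolding par_def
  proof (rule the_equality)
    show "?p \<in> idx (Suc b - 1) \<and> Zc \<kappa> (Suc b) \<subseteq> Zc ?p (Suc b - 1)" using pidx sub by simp
  next
    fix k' assume "k' \<in> idx (Suc b - 1) \<and> Zc \<kappa> (Suc b) \<subseteq> Zc k' (Suc b - 1)"
    then have "cen \<kappa> (Suc b) \<in> Zc k' b" using cz by auto
    moreover have "cen \<kappa> (Suc b) \<in> Zc ?p b" using cz sub by auto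
    ultimately show "k' = ?p" by (rule Zc_overlap)
  qed
  show "?p \<in> idx b" by (rule pidx)
qed



lemma U_Suc_D:
  assumes k: "k \<in> idx (Suc b)" and u: "Zc k (Suc b) \<in> U (Suc b)"
  shows "par k (Suc b) \<in> idx b \<and> Zc (par k (Suc b)) b \<in> U b
     \<and> linf (cen k (Suc b) - cen (par k (Suc b)) b) \<le> 2 * gam (Suc b)"
proof -
  obtain k' where e: "Zc k (Suc b) = Zc k' (Suc b)" and k': "k' \<in> idx (Suc b)"
    and u': "Zc (par k' (Suc b)) b \<in> U b"
    and l: "linf (cen k' (Suc b) - cen (par k' (Suc b)) b) \<le> 2 * gam (Suc b)"
    using u by auto
  have "cen k (Suc b) \<in> Zc k' (Suc b)" using cen_in_Zc[OF k] e by simp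
  then have "k = k'" using cen_in_Zc[OF k] by (rule Zc_overlap[rotated])
  then show ?thesis using u' l par_eq[OF k] by simp
qed

lemma chain:
  assumes k: "\<kappa> \<in> idx a" and u: "Zc \<kappa> a \<in> U a"
  shows "l \<le> a \<Longrightarrow> piter \<kappa> a l \<in> idx (a - l) \<and> Zc (piter \<kappa> a l) (a - l) \<in> U (a - l)"
proof (induction l)
  case 0
  then show ?case using k u by simp
next
  case (Suc l)
  then have h: "piter \<kappa> a l \<in> idx (Suc (a - Suc l)) \<and> Zc (piter \<kappa> a l) (Suc (a - Suc l)) \<in> U (Suc (a - Suc l))"
    by (simp add: Suc_diff_Suc)
  have "a - l = Suc (a - Suc l)" using Suc.prems by simp
  then show ?case using U_Suc_D[of "piter \<kappa> a l" "a - Suc l"] h by simp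
qed

lemma chain_step:
  assumes k: "\<kappa> \<in> idx a" and u: "Zc \<kappa> a \<in> U a" and l: "l < a"
  shows "linf (cen (piter \<kappa> a l) (a - l) - cen (piter \<kappa> a (Suc l)) (a - Suc l)) \<le> 2 * gam (a - l)"
proof -
  have h: "piter \<kappa> a l \<in> idx (Suc (a - Suc l)) \<and> Zc (piter \<kappa> a l) (Suc (a - Suc l)) \<in> U (Suc (a - Suc l))"
    using chain[OF k u, of l] l by (simp add: Suc_diff_Suc)
  have "a - l = Suc (a - Suc l)" using l by simp
  then show ?thesis using U_Suc_D[of "piter \<kappa> a l" "a - Suc l"] h by simp
qed

lemma D_pos: "\<alpha> > 0 \<Longrightarrow> 5 powr \<alpha> - 3 powr \<alpha> > (0::real)"
  using powr_less_mono2[of \<alpha> 3 5] by simp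

lemma MhD: "\<alpha> > 0 \<Longrightarrow> Mhat \<alpha> Mt * (5 powr \<alpha> - 3 powr \<alpha>) = 40 powr \<alpha> * Mt"
  using D_pos[of \<alpha>] by (simp add: Mhat_def)

lemma Mh_pos: "\<alpha> > 0 \<Longrightarrow> Mt > 0 \<Longrightarrow> Mhat \<alpha> Mt > 0"
  using D_pos[of \<alpha>] by (simp add: Mhat_def)

lemma yS_props:
  fixes x :: "real^'d::finite" and a :: nat and k :: "'d \<Rightarrow> nat"
  assumes a: "\<alpha> > 0" and m: "Mt > 0"
  defines "H \<equiv> Mhat \<alpha> Mt * (5 powr \<alpha> - 3 powr \<alpha>) * gam (a+1) powr \<alpha>"
  shows "0 \<le> yS \<alpha> Mt k a x" "yS \<alpha> Mt k a x \<le> H"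
    "linf (x - cen k a) \<le> 3 * gam (a+1) \<Longrightarrow> yS \<alpha> Mt k a x = H"
    "linf (x - cen k a) > 5 * gam (a+1) \<Longrightarrow> yS \<alpha> Mt k a x = 0"
proof -
  let ?r = "linf (x - cen k a)" and ?g = "gam (a+1)" and ?M = "Mhat \<alpha> Mt"
  have M: "?M > 0" by (rule Mh_pos[OF a m])
  have D: "5 powr \<alpha> - 3 powr \<alpha> > (0::real)" by (rule D_pos[OF a])
  have g: "?g > 0" by (rule gam_pos)
  have mid: "0 \<le> ?M * 5 powr \<alpha> * ?g powr \<alpha> - ?M * ?r powr \<alpha> \<and> ?M * 5 powr \<alpha> * ?g powr \<alpha> - ?M * ?r powr \<alpha> \<le> H"
    if "3 * ?g < ?r" "?r \<le> 5 * ?g"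
  proof -
    have "?r powr \<alpha> \<le> (5 * ?g) powr \<alpha>" using that g a by (intro powr_mono2) auto
    then have u: "?r powr \<alpha> \<le> 5 powr \<alpha> * ?g powr \<alpha>" by (simp add: powr_mult)
    have "(3 * ?g) powr \<alpha> < ?r powr \<alpha>" using that g a by (intro powr_less_mono2) auto
    then have l: "3 powr \<alpha> * ?g powr \<alpha> < ?r powr \<alpha>" by (simp add: powr_mult)
    have "?M * ?r powr \<alpha> \<le> ?M * (5 powr \<alpha> * ?g powr \<alpha>)" using u M by (intro mult_left_mono) auto
    moreover have "?M * (3 powr \<alpha> * ?g powr \<alpha>) \<le> ?M * ?r powr \<alpha>" using l M by (intro mult_left_mono) auto
    ultimately show ?thesis unfolding H_def by (simp add: algebra_simps)
  qed
  have Hnn: "0 \<le> H" unfolding H_def using M D by simp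
  show "0 \<le> yS \<alpha> Mt k a x" "yS \<alpha> Mt k a x \<le> H"
    using mid Hnn unfolding yS_def Let_def H_def by (auto simp: algebra_simps)
  show "?r \<le> 3 * ?g \<Longrightarrow> yS \<alpha> Mt k a x = H" unfolding yS_def Let_def H_def by simp
  show "?r > 5 * ?g \<Longrightarrow> yS \<alpha> Mt k a x = 0" using g unfolding yS_def Let_def by auto
qed

lemma yD_props:
  fixes x :: "real^'d::finite"
  assumes a: "\<alpha> > 0" and m: "Mt > 0"
  shows "yD \<alpha> Mt k a x \<le> Mhat \<alpha> Mt * gam a powr \<alpha>"
    "linf (x - cen k a) \<le> gam a \<Longrightarrow> yD \<alpha> Mt k a x = Mhat \<alpha> Mt * gam a powr \<alpha> - Mhat \<alpha> Mt * linf (x - cen k a) powr \<alpha>"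
    "linf (x - cen k a) > gam a \<Longrightarrow> yD \<alpha> Mt k a x = 0"
proof -
  have M: "Mhat \<alpha> Mt > 0" by (rule Mh_pos[OF a m])
  show "yD \<alpha> Mt k a x \<le> Mhat \<alpha> Mt * gam a powr \<alpha>"
    using M unfolding yD_def Let_def by auto
  show "linf (x - cen k a) \<le> gam a \<Longrightarrow> yD \<alpha> Mt k a x = Mhat \<alpha> Mt * gam a powr \<alpha> - Mhat \<alpha> Mt * linf (x - cen k a) powr \<alpha>"
    unfolding yD_def Let_def by simp
  show "linf (x - cen k a) > gam a \<Longrightarrow> yD \<alpha> Mt k a x = 0"
    unfolding yD_def Let_def by simp
qed

lemma geo1:
  fixes g :: "nat \<Rightarrow> real"
  assumes g0: "\<And>k. g k \<ge> 0" and gs: "\<And>k. g (Suc k) = q * g k" and q: "0 \<le> q" "q < 1"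
  shows "(\<Sum>j<N. g (k + j)) \<le> g k / (1 - q)"
proof (induction N arbitrary: k)
  case 0
  then show ?case using g0[of k] q by simp
next
  case (Suc N)
  have "(\<Sum>j<Suc N. g (k + j)) = g k + (\<Sum>j<N. g (Suc k + j))"
    by (subst sum.lessThan_Suc_shift) simp
  also have "\<dots> \<le> g k + g (Suc k) / (1 - q)" using Suc.IH[of "Suc k"] by simp
  also have "\<dots> = g k / (1 - q)" using q gs[of k] by (simp add: field_simps)
  finally show ?case .
qed

lemma geo2:
  fixes g :: "nat \<Rightarrow> real"
  assumes g0: "\<And>k. g k \<ge> 0" and gs: "\<And>k. g (Suc k) = q * g k" and q: "0 \<le> q" "q < 1"
    and B: "B \<ge> 0"
  shows "(\<Sum>j<N. if g (k + j) \<le> B then g (k + j) else 0) \<le> B / (1 - q)"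
proof (induction N arbitrary: k)
  case 0
  then show ?case using B q by simp
next
  case (Suc N)
  show ?case
  proof (cases "g k \<le> B")
    case True
    have "(\<Sum>j<Suc N. if g (k + j) \<le> B then g (k + j) else 0) \<le> (\<Sum>j<Suc N. g (k + j))"
      using g0 by (intro sum_mono) auto
    also have "\<dots> \<le> g k / (1 - q)" by (rule geo1[of g q, OF g0 gs q])
    also have "\<dots> \<le> B / (1 - q)" using True q by (intro divide_right_mono) auto
    finally show ?thesis .
  next
    case False
    have "(\<Sum>j<Suc N. if g (k + j) \<le> B then g (k + j) else 0)
        = (\<Sum>j<N. if g (Suc k + j) \<le> B then g (Suc k + j) else 0)"
      using False by (subst sum.lessThan_Suc_shift) (auto intro!: sum.cong)
    also have "\<dots> \<le> B / (1 - q)" by (rule Suc.IH)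
    finally show ?thesis .
  qed
qed



lemma Mh_ge8: "\<alpha> > 0 \<Longrightarrow> Mt > 0 \<Longrightarrow> Mhat \<alpha> Mt \<ge> 8 powr \<alpha> * Mt"
proof -
  assume a: "\<alpha> > 0" and m: "Mt > 0"
  have D: "5 powr \<alpha> - 3 powr \<alpha> > 0" by (rule D_pos[OF a])
  have D5: "5 powr \<alpha> - 3 powr \<alpha> \<le> 5 powr \<alpha>" by simp
  have e: "40 powr \<alpha> = 8 powr \<alpha> * 5 powr \<alpha>" using powr_mult[of 8 5 \<alpha>] by simp
  have "8 powr \<alpha> * Mt * (5 powr \<alpha> - 3 powr \<alpha>) \<le> 8 powr \<alpha> * Mt * 5 powr \<alpha>"
    using D5 m by (intro mult_left_mono) auto
  also have "\<dots> = 40 powr \<alpha> * Mt" using e by simp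
  finally have "8 powr \<alpha> * Mt \<le> 40 powr \<alpha> * Mt / (5 powr \<alpha> - 3 powr \<alpha>)"
    using D by (simp add: pos_le_divide_eq)
  then show ?thesis by (simp add: Mhat_def)
qed

lemma main:
  fixes \<alpha> M Mt :: real and A :: nat and \<kappa> :: "'d::finite \<Rightarrow> nat"
  assumes a: "\<alpha> > 0" and mM: "M > 0" and m: "Mt > 0"
    and hM: "M / Mt \<ge> (1 / (1 - 5 powr (- \<alpha>))) * (1 + 1 / (5 powr \<alpha> - 3 powr \<alpha>)) * 80 powr \<alpha>"
    and A1: "A \<ge> 1"
    and k: "\<kappa> \<in> idx A"
    and u: "Zc \<kappa> A \<in> U A"
  shows "{x \<in> unitcube. \<forall>z \<in> unitcube. yC \<alpha> Mt \<kappa> A z \<le> yC \<alpha> Mt \<kappa> A x}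
           = {cen \<kappa> A}
       \<and> (\<forall>x \<in> unitcube.
            Mt * linf (cen \<kappa> A - x) powr \<alpha>
              \<le> \<bar>yC \<alpha> Mt \<kappa> A (cen \<kappa> A) - yC \<alpha> Mt \<kappa> A x\<bar>
            \<and> \<bar>yC \<alpha> Mt \<kappa> A (cen \<kappa> A) - yC \<alpha> Mt \<kappa> A x\<bar>
              \<le> M * linf (cen \<kappa> A - x) powr \<alpha>)"
proof -
  define c where "c j = cen (piter \<kappa> A (A - j)) j" for j
  have cc: "cen (piter \<kappa> A (A - j)) j = c j" for j by (simp add: c_def)
  have cA: "c A = cen \<kappa> A" by (simp add: c_def)
  have "piter \<kappa> A A \<in> idx 0" using chain[OF k u, of A] by simp
  then have pA: "piter \<kappa> A A = (\<lambda>_. 1)" by (rule idx0)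
  have c0: "c 0 = cen (\<lambda>_. 1) 0" using pA by (simp add: c_def)
  have step: "linf (c (Suc j) - c j) \<le> 2 * gam (Suc j)" if j: "j < A" for j
  proof -
    have e1: "A - (A - Suc j) = Suc j" "Suc (A - Suc j) = A - j" "A - Suc (A - Suc j) = j" using j by auto
    show ?thesis using chain_step[OF k u, of "A - Suc j"] j unfolding e1 by (simp add: c_def)
  qed
  have distm: "m \<le> A \<Longrightarrow> linf (c A - c (A - m)) \<le> 5/2 * gam (Suc (A - m)) - 5/2 * gam (Suc A)" for m
  proof (induction m)
    case 0
    then show ?case using linf_self[of "c A"] by simp
  next
    case (Suc m)
    define j where "j = A - Suc m"
    have jA: "j < A" "A - m = Suc j" using Suc.prems by (auto simp: j_def)
    have "linf (c A - c j) \<le> linf (c A - c (Suc j)) + linf (c (Suc j) - c j)" by (rule linf_tri)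
    also have "\<dots> \<le> (5/2 * gam (Suc (Suc j)) - 5/2 * gam (Suc A)) + 2 * gam (Suc j)"
      using Suc.IH Suc.prems step[OF jA(1)] jA by simp
    also have "\<dots> = 5/2 * gam (Suc j) - 5/2 * gam (Suc A)" by (simp add: gam_Suc[of "Suc j"])
    finally show ?case by (simp add: j_def)
  qed
  have dist: "linf (c A - c j) \<le> 5/2 * gam (Suc j)" if "j \<le> A" for j
  proof -
    have "A - (A - j) = j" using that by simp
    then show ?thesis using distm[of "A - j"] that gam_pos[of "Suc A"] by simp
  qed
  have yS0e: "yS0 \<alpha> Mt x = yS \<alpha> Mt (\<lambda>_. 1) 0 x" for x :: "real^'d"
    by (simp add: yS0_def yS_def Let_def)
  have yCe: "yC \<alpha> Mt \<kappa> A x = yD \<alpha> Mt \<kappa> A x + (\<Sum>j<A. yS \<alpha> Mt (piter \<kappa> A (A - j)) j x)" for x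
  proof -
    have sumeq: "(\<Sum>l\<in>{1..A-1}. yS \<alpha> Mt (piter \<kappa> A l) (A - l) x) = (\<Sum>j\<in>{1..A-1}. yS \<alpha> Mt (piter \<kappa> A (A - j)) j x)"
      by (rule sum.reindex_bij_witness[of _ "\<lambda>j. A - j" "\<lambda>l. A - l"]) auto
    have se: "{..<A} = insert 0 {1..A-1}" using A1 by auto
    have "(\<Sum>j<A. yS \<alpha> Mt (piter \<kappa> A (A - j)) j x) = yS \<alpha> Mt (piter \<kappa> A A) 0 x + (\<Sum>j\<in>{1..A-1}. yS \<alpha> Mt (piter \<kappa> A (A - j)) j x)"
      unfolding se by (subst sum.insert) auto
    then show ?thesis unfolding yC_def sumeq yS0e pA by simp
  qed
  let ?Mh = "Mhat \<alpha> Mt"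
  let ?K = "40 powr \<alpha> * Mt"
  define H where "H j = ?K * gam (j+1) powr \<alpha>" for j
  have HS: "Mhat \<alpha> Mt * (5 powr \<alpha> - 3 powr \<alpha>) * gam (j+1) powr \<alpha> = H j" for j
    using MhD[OF a, of Mt] by (simp add: H_def)
  have Mh8: "?Mh \<ge> 8 powr \<alpha> * Mt" by (rule Mh_ge8[OF a m])
  have p8: "8 powr \<alpha> \<ge> (1::real)" using powr_mono2[of \<alpha> 1 8] a by simp
  have "1 * Mt \<le> 8 powr \<alpha> * Mt" using p8 m by (intro mult_right_mono) auto
  then have MhMt: "?Mh \<ge> Mt" using Mh8 by simp
  let ?xs = "cen \<kappa> A"
  have xs_cube: "?xs \<in> unitcube" by (rule cen_cube[OF k])
  have yDxs: "yD \<alpha> Mt \<kappa> A ?xs = ?Mh * gam A powr \<alpha>"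
    using yD_props(2)[OF a m, of ?xs \<kappa> A] linf_self[of ?xs] gam_pos[of A] by simp
  have ySxs: "yS \<alpha> Mt (piter \<kappa> A (A - j)) j ?xs = H j" if "j < A" for j
  proof -
    have "linf (?xs - c j) \<le> 3 * gam (j+1)" using dist[of j] that gam_pos[of "Suc j"] cA by simp
    then show ?thesis using yS_props(3)[OF a m, of ?xs "piter \<kappa> A (A - j)" j] HS cc by simp
  qed
  have est: "Mt * linf (?xs - x) powr \<alpha> \<le> yC \<alpha> Mt \<kappa> A ?xs - yC \<alpha> Mt \<kappa> A x
      \<and> yC \<alpha> Mt \<kappa> A ?xs - yC \<alpha> Mt \<kappa> A x \<le> M * linf (?xs - x) powr \<alpha>" if x: "x \<in> unitcube" for x
  proof -
    define r where "r = linf (?xs - x)"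
    have r0: "r \<ge> 0" by (simp add: r_def linf_nonneg)
    have rx: "linf (x - c A) = r" using cA linf_commute r_def by metis
    define dD where "dD = ?Mh * gam A powr \<alpha> - yD \<alpha> Mt \<kappa> A x"
    define dS where "dS j = H j - yS \<alpha> Mt (piter \<kappa> A (A - j)) j x" for j
    have diff: "yC \<alpha> Mt \<kappa> A ?xs - yC \<alpha> Mt \<kappa> A x = dD + (\<Sum>j<A. dS j)"
      using ySxs unfolding yCe yDxs dD_def dS_def by (simp add: sum_subtractf)
    have dD0: "dD \<ge> 0" using yD_props(1)[OF a m, of \<kappa> A x] by (simp add: dD_def)
    have dS0: "dS j \<ge> 0" for j using yS_props(2)[OF a m, of "piter \<kappa> A (A - j)" j x] HS by (simp add: dS_def)
    have Hnn: "H j \<ge> 0" for j using m by (simp add: H_def)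
    have low: "Mt * r powr \<alpha> \<le> dD + (\<Sum>j<A. dS j)"
    proof (cases "r \<le> gam A")
      case True
      have "dD = ?Mh * r powr \<alpha>" using yD_props(2)[OF a m, of x \<kappa> A] True rx cA by (simp add: dD_def)
      moreover have "Mt * r powr \<alpha> \<le> ?Mh * r powr \<alpha>" using MhMt by (intro mult_right_mono) auto
      moreover have "0 \<le> (\<Sum>j<A. dS j)" using dS0 by (simp add: sum_nonneg)
      ultimately show ?thesis by linarith
    next
      case False
      have "\<exists>j<A. linf (x - c j) \<le> gam j \<and> linf (x - c (Suc j)) > gam (Suc j)"
      proof (rule ccontr)
        assume "\<not> ?thesis"
        then have H1: "\<And>j. j < A \<Longrightarrow> linf (x - c j) \<le> gam j \<Longrightarrow> linf (x - c (Suc j)) \<le> gam (Suc j)"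
          by (meson not_le)
        have "\<forall>i. \<bar>(x - c 0) $ i\<bar> \<le> gam 0"
        proof
          fix i
          have h: "0 \<le> x $ i" "x $ i \<le> 1" using x by (auto simp: unitcube_def)
          have e: "(x - c 0) $ i = x $ i - 1/2" "gam 0 = 1/2" by (simp_all add: c0 cen_def gam_def)
          have "\<bar>x $ i - 1/2\<bar> \<le> 1/2" using h by arith
          then show "\<bar>(x - c 0) $ i\<bar> \<le> gam 0" unfolding e by simp
        qed
        then have b0: "linf (x - c 0) \<le> gam 0" using linf_le_iff by blast
        have "j \<le> A \<Longrightarrow> linf (x - c j) \<le> gam j" for j
          by (induction j) (use b0 H1 in auto)
        then show False using False rx by (metis order.refl)
      qed
      then obtain j where j: "j < A" "linf (x - c j) \<le> gam j" "linf (x - c (Suc j)) > gam (Suc j)" by blast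
      have "r \<le> linf (x - c j) + linf (c j - c A)" using linf_tri[of x "c A" "c j"] rx by simp
      also have "\<dots> \<le> gam j + 5/2 * gam (Suc j)" using j(2) dist[of j] j(1) linf_commute[of "c j" "c A"] by simp
      also have "\<dots> = 15/2 * gam (Suc j)" by (simp add: gam_Suc)
      finally have rb: "r \<le> 15/2 * gam (Suc j)" .
      show ?thesis
      proof (cases "Suc j = A")
        case True
        have "yD \<alpha> Mt \<kappa> A x = 0" using yD_props(3)[OF a m, of A x \<kappa>] j(3) True cA by simp
        then have dDe: "dD = ?Mh * gam A powr \<alpha>" by (simp add: dD_def)
        have "r powr \<alpha> \<le> (8 * gam A) powr \<alpha>" using rb True r0 a by (intro powr_mono2) auto
        then have "r powr \<alpha> \<le> 8 powr \<alpha> * gam A powr \<alpha>" by (simp add: powr_mult)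
        then have "Mt * r powr \<alpha> \<le> Mt * (8 powr \<alpha> * gam A powr \<alpha>)" using m by (intro mult_left_mono) auto
        also have "\<dots> = (8 powr \<alpha> * Mt) * gam A powr \<alpha>" by simp
        also have "\<dots> \<le> ?Mh * gam A powr \<alpha>" using Mh8 by (intro mult_right_mono) auto
        finally show ?thesis using dDe dS0 sum_nonneg[of "{..<A}" dS] by (smt (verit))
      next
        case False
        then have j1: "Suc j < A" using j(1) by simp
        have "linf (x - cen (piter \<kappa> A (A - Suc j)) (Suc j)) > 5 * gam (Suc j + 1)"
          using j(3) cc[of "Suc j"] by (simp add: gam_Suc)
        then have "yS \<alpha> Mt (piter \<kappa> A (A - Suc j)) (Suc j) x = 0" by (rule yS_props(4)[OF a m])
        then have dSe: "dS (Suc j) = H (Suc j)" by (simp add: dS_def)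
        have "r \<le> 40 * gam (Suc j + 1)" using rb gam_pos[of "Suc j"] by (simp add: gam_Suc)
        then have "r powr \<alpha> \<le> (40 * gam (Suc j + 1)) powr \<alpha>" using r0 a by (intro powr_mono2) auto
        then have "r powr \<alpha> \<le> 40 powr \<alpha> * gam (Suc j + 1) powr \<alpha>" by (simp add: powr_mult)
        then have "Mt * r powr \<alpha> \<le> Mt * (40 powr \<alpha> * gam (Suc j + 1) powr \<alpha>)" using m by (intro mult_left_mono) auto
        also have "\<dots> = dS (Suc j)" using dSe by (simp add: H_def)
        also have "\<dots> \<le> (\<Sum>j<A. dS j)" using j1 dS0 by (intro member_le_sum) auto
        finally show ?thesis using dD0 by linarith
      qed
    qed
    define q :: real where "q = 5 powr (- \<alpha>)"
    have p5: "5 powr \<alpha> > (1::real)" using powr_less_mono2[of \<alpha> 1 5] a by simp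
    have q01: "0 < q" "q < 1" using p5 by (auto simp: q_def powr_minus_divide)
    define gg where "gg j = gam (j+1) powr \<alpha>" for j
    have gg0: "gg j \<ge> 0" for j by (simp add: gg_def)
    have ggs: "gg (Suc j) = q * gg j" for j
    proof -
      have e: "gam (Suc j + 1) = gam (j+1) / 5" by (simp add: gam_def)
      have "gg (Suc j) = (gam (j+1) / 5) powr \<alpha>" unfolding gg_def e ..
      also have "\<dots> = gam (j+1) powr \<alpha> / 5 powr \<alpha>" by (rule powr_divide)
      also have "\<dots> = q * gg j" by (simp add: q_def gg_def powr_minus_divide)
      finally show ?thesis .
    qed
    define B where "B = 2 powr \<alpha> * r powr \<alpha>"
    have B0: "B \<ge> 0" by (simp add: B_def)
    have dDu: "dD \<le> ?Mh * r powr \<alpha>"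
    proof (cases "r \<le> gam A")
      case True
      then show ?thesis using yD_props(2)[OF a m, of x \<kappa> A] rx cA by (simp add: dD_def)
    next
      case False
      have "yD \<alpha> Mt \<kappa> A x = 0" using yD_props(3)[OF a m, of A x \<kappa>] False rx cA by simp
      moreover have "gam A powr \<alpha> \<le> r powr \<alpha>" using False gam_pos[of A] a by (intro powr_mono2) auto
      ultimately show ?thesis using Mh_pos[OF a m] by (simp add: dD_def)
    qed
    have dSu: "dS j \<le> ?K * (if gg j \<le> B then gg j else 0)" if j: "j < A" for j
    proof (cases "linf (x - c j) \<le> 3 * gam (j+1)")
      case True
      then have "dS j = 0" using yS_props(3)[OF a m, of x "piter \<kappa> A (A - j)" j] cc HS by (simp add: dS_def)
      then show ?thesis using m gg0 by simp
    next
      case False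
      have "linf (x - c j) \<le> linf (x - c A) + linf (c A - c j)" by (rule linf_tri)
      then have "3 * gam (j+1) < r + 5/2 * gam (Suc j)" using False dist[of j] j rx by simp
      then have "gam (j+1) \<le> 2 * r" by simp
      then have "gg j \<le> (2 * r) powr \<alpha>" unfolding gg_def using a gam_pos[of "j+1"] by (intro powr_mono2) auto
      then have "gg j \<le> B" by (simp add: B_def powr_mult)
      then show ?thesis using dS0 yS_props(1)[OF a m, of "piter \<kappa> A (A - j)" j x] HS
        by (simp add: dS_def H_def gg_def)
    qed
    have "(\<Sum>j<A. dS j) \<le> (\<Sum>j<A. ?K * (if gg j \<le> B then gg j else 0))"
      using dSu by (intro sum_mono) auto
    also have "\<dots> = ?K * (\<Sum>j<A. if gg j \<le> B then gg j else 0)" by (simp add: sum_distrib_left)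
    also have "\<dots> \<le> ?K * (B / (1 - q))"
    proof -
      have "(\<Sum>j<A. if gg (0 + j) \<le> B then gg (0 + j) else 0) \<le> B / (1 - q)"
        by (rule geo2[of gg q B, where N=A and k=0, OF gg0 ggs less_imp_le[OF q01(1)] q01(2) B0])
      then have "(\<Sum>j<A. if gg j \<le> B then gg j else 0) \<le> B / (1 - q)"
        unfolding add.left_neutral .
      then show ?thesis using m by (intro mult_left_mono) auto
    qed
    finally have sumu: "(\<Sum>j<A. dS j) \<le> ?K * (B / (1 - q))" .
    define D where "D = 5 powr \<alpha> - 3 powr \<alpha>"
    have D0: "D > 0" using D_pos[OF a] by (simp add: D_def)
    define E where "E = 1 / (1 - q)"
    have E1: "E \<ge> 1" using q01 by (simp add: E_def)
    have e80: "80 powr \<alpha> = 40 powr \<alpha> * 2 powr \<alpha>" using powr_mult[of 40 2 \<alpha>] by simp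
    have p4080: "40 powr \<alpha> \<le> 80 powr (\<alpha>::real)" using a by (intro powr_mono2) auto
    have Mge: "M \<ge> Mt * (E * (1 + 1 / D) * 80 powr \<alpha>)"
      using hM m by (simp add: pos_le_divide_eq E_def D_def q_def mult.commute)
    have "Mt * (E * (1 + 1 / D) * 80 powr \<alpha>) = Mt * E * 80 powr \<alpha> + Mt * E * 80 powr \<alpha> / D"
      using D0 by (simp add: field_simps)
    moreover have "?Mh \<le> Mt * E * 80 powr \<alpha> / D"
    proof -
      have "40 powr \<alpha> \<le> E * 80 powr \<alpha>" using p4080 E1
        by (smt (verit) mult_le_cancel_right1 powr_ge_zero)
      then have "40 powr \<alpha> * Mt \<le> E * 80 powr \<alpha> * Mt" using m by (intro mult_right_mono) auto
      then show ?thesis using D0 by (simp add: Mhat_def D_def[symmetric] divide_right_mono mult.commute mult.left_commute)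
    qed
    moreover have "?K * (B / (1 - q)) = Mt * E * 80 powr \<alpha> * r powr \<alpha>"
      by (simp add: B_def E_def e80)
    ultimately have Mfin: "?Mh + Mt * E * 80 powr \<alpha> \<le> M" using Mge by linarith
    have "dD + (\<Sum>j<A. dS j) \<le> ?Mh * r powr \<alpha> + Mt * E * 80 powr \<alpha> * r powr \<alpha>"
      using dDu sumu \<open>?K * (B / (1 - q)) = Mt * E * 80 powr \<alpha> * r powr \<alpha>\<close> by linarith
    also have "\<dots> = (?Mh + Mt * E * 80 powr \<alpha>) * r powr \<alpha>" by (simp add: algebra_simps)
    also have "\<dots> \<le> M * r powr \<alpha>" using Mfin by (intro mult_right_mono) auto
    finally have up: "dD + (\<Sum>j<A. dS j) \<le> M * r powr \<alpha>" .
    show ?thesis using low up diff r_def by simp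
  qed
  have part2: "\<forall>x \<in> unitcube.
            Mt * linf (?xs - x) powr \<alpha> \<le> \<bar>yC \<alpha> Mt \<kappa> A ?xs - yC \<alpha> Mt \<kappa> A x\<bar>
            \<and> \<bar>yC \<alpha> Mt \<kappa> A ?xs - yC \<alpha> Mt \<kappa> A x\<bar> \<le> M * linf (?xs - x) powr \<alpha>"
  proof
    fix x :: "real^'d" assume x: "x \<in> unitcube"
    have nn: "0 \<le> Mt * linf (?xs - x) powr \<alpha>" using m by simp
    then show "Mt * linf (?xs - x) powr \<alpha> \<le> \<bar>yC \<alpha> Mt \<kappa> A ?xs - yC \<alpha> Mt \<kappa> A x\<bar>
            \<and> \<bar>yC \<alpha> Mt \<kappa> A ?xs - yC \<alpha> Mt \<kappa> A x\<bar> \<le> M * linf (?xs - x) powr \<alpha>"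
      using est[OF x] by auto
  qed
  have part1: "{x \<in> unitcube. \<forall>z \<in> unitcube. yC \<alpha> Mt \<kappa> A z \<le> yC \<alpha> Mt \<kappa> A x} = {?xs}"
  proof
    show "{?xs} \<subseteq> {x \<in> unitcube. \<forall>z \<in> unitcube. yC \<alpha> Mt \<kappa> A z \<le> yC \<alpha> Mt \<kappa> A x}"
    proof -
      have "yC \<alpha> Mt \<kappa> A z \<le> yC \<alpha> Mt \<kappa> A ?xs" if "z \<in> unitcube" for z
        using est[OF that] m by (smt (verit) mult_nonneg_nonneg powr_ge_zero)
      then show ?thesis using xs_cube by auto
    qed
  next
    show "{x \<in> unitcube. \<forall>z \<in> unitcube. yC \<alpha> Mt \<kappa> A z \<le> yC \<alpha> Mt \<kappa> A x} \<subseteq> {?xs}"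
    proof
      fix x :: "real^'d" assume "x \<in> {x \<in> unitcube. \<forall>z \<in> unitcube. yC \<alpha> Mt \<kappa> A z \<le> yC \<alpha> Mt \<kappa> A x}"
      then have x: "x \<in> unitcube" and mx: "yC \<alpha> Mt \<kappa> A ?xs \<le> yC \<alpha> Mt \<kappa> A x" using xs_cube by auto
      have "Mt * linf (?xs - x) powr \<alpha> \<le> 0" using est[OF x] mx by linarith
      then have "linf (?xs - x) powr \<alpha> \<le> 0" using m by (simp add: mult_le_0_iff)
      then have "linf (?xs - x) \<le> 0" using powr_gt_zero[of "linf (?xs - x)" \<alpha>] linf_nonneg[of "?xs - x"] by linarith
      then have "?xs = x" by (rule linf_zero)
      then show "x \<in> {?xs}" by simp
    qed
  qed
  show ?thesis using part1 part2 by blast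
qed


theorem lemma5:
  fixes \<alpha> M Mt :: real and n :: nat and \<kappa> :: "'d::finite \<Rightarrow> nat"
  assumes "\<alpha> > 0" and "M > 0" and "Mt > 0"
    and "M / Mt \<ge> (1 / (1 - 5 powr (- \<alpha>))) * (1 + 1 / (5 powr \<alpha> - 3 powr \<alpha>)) * 80 powr \<alpha>"
    and "n \<ge> 1"
    and "\<kappa> \<in> idx (abar n CARD('d))"
    and "Zc \<kappa> (abar n CARD('d)) \<in> U (abar n CARD('d))"
  shows "{x \<in> unitcube. \<forall>z \<in> unitcube. yC \<alpha> Mt \<kappa> (abar n CARD('d)) z \<le> yC \<alpha> Mt \<kappa> (abar n CARD('d)) x}
           = {cen \<kappa> (abar n CARD('d))}
       \<and> (\<forall>x \<in> unitcube.
            Mt * linf (cen \<kappa> (abar n CARD('d)) - x) powr \<alpha>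
              \<le> \<bar>yC \<alpha> Mt \<kappa> (abar n CARD('d)) (cen \<kappa> (abar n CARD('d))) - yC \<alpha> Mt \<kappa> (abar n CARD('d)) x\<bar>
            \<and> \<bar>yC \<alpha> Mt \<kappa> (abar n CARD('d)) (cen \<kappa> (abar n CARD('d))) - yC \<alpha> Mt \<kappa> (abar n CARD('d)) x\<bar>
              \<le> M * linf (cen \<kappa> (abar n CARD('d)) - x) powr \<alpha>)"
proof -
  have "abar n CARD('d) \<ge> 1" by (simp add: abar_def)
  then show ?thesis using main assms by blast
qed

end
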